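(* Let $M,N\in\mathbb N$ with $M>N$, let $\mathcal B\subseteq\mathcal D^N$, and let $f\in L_q[0,1]$ with $\int f=0$. On $\{-1,1\}^{\mathcal B}$ with the uniform probability, define $Y(\theta)=\langle f,\sum_{K\in\mathcal B}\theta_Kh^M_K\rangle$. Then $\mathbb E(Y)=0$ and $\mathrm{Var}(Y)\le\|f\|_q^2\,|\bigcup\mathcal B|^{1/p}\,2^{-N/p}$, where $|\bigcup\mathcal B|$ is the Lebesgue measure of the union of the intervals in $\mathcal B$.
   Context: Fix $1<p<\infty$, $q=p/(p-1)$. $\langle g,f\rangle=\int_0^1 gf$. A dyadic interval is $[(i-1)2^{-n},i2^{-n})$ with $n\ge0$, $1\le i\le2^n$; $\mathcal D^n$ denotes those of length $2^{-n}$ and $\mathcal D_n=\bigcup_{k=0}^n\mathcal D^k$. For a dyadic interval $I$, $I^+$, $I^-$ are its left and right halves and $h_I=\chi_{I^+}-\chi_{I^-}$. For each $n\in\mathbb N$ a family $(h^n_I)_{I\in\mathcal D_{n-1}}$ in $L_p[0,1]$ is fixed, having the same joint distribution as $(h_I)_{I\in\mathcal D_{n-1}}$, such that the $\sigma$-algebras $\sigma(h^n_I:I\in\mathcal D_{n-1})$, $n\in\mathbb N$, are independent. *)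

theory Defs
  imports "HOL-Probability.Probability"
begin

text \<open>A dyadic interval is encoded by a pair (n,i) with 1 \<le> i \<le> 2^n; it denotes
  the half-open interval [(i-1) 2^-n, i 2^-n).\<close>

definition dyint :: "nat \<times> nat \<Rightarrow> real set" where
  "dyint K = {(real (snd K) - 1) / 2 ^ fst K ..< real (snd K) / 2 ^ fst K}"

definition Dlev :: "nat \<Rightarrow> (nat \<times> nat) set" where
  "Dlev n = {(n, i) | i. 1 \<le> i \<and> i \<le> 2 ^ n}"

definition Dupto :: "nat \<Rightarrow> (nat \<times> nat) set" where
  "Dupto n = (\<Union>k\<le>n. Dlev k)"

definition dyleft :: "nat \<times> nat \<Rightarrow> nat \<times> nat" where
  "dyleft K = (Suc (fst K), 2 * snd K - 1)"

definition dyright :: "nat \<times> nat \<Rightarrow> nat \<times> nat" where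
  "dyright K = (Suc (fst K), 2 * snd K)"

definition haar :: "nat \<times> nat \<Rightarrow> real \<Rightarrow> real" where
  "haar K x = indicator (dyint (dyleft K)) x - indicator (dyint (dyright K)) x"

abbreviation U01 :: "real measure" where
  "U01 \<equiv> lebesgue_on {0..1}"

definition pair01 :: "(real \<Rightarrow> real) \<Rightarrow> (real \<Rightarrow> real) \<Rightarrow> real" where
  "pair01 g f = (LINT x|U01. g x * f x)"

definition Lnorm :: "real \<Rightarrow> (real \<Rightarrow> real) \<Rightarrow> real" where
  "Lnorm r f = (LINT x|U01. \<bar>f x\<bar> powr r) powr (1 / r)"

definition hvec :: "nat \<Rightarrow> (nat \<Rightarrow> nat \<times> nat \<Rightarrow> real \<Rightarrow> real) \<Rightarrow> real \<Rightarrow> (nat \<times> nat \<Rightarrow> real)" where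
  "hvec n hh x = (\<lambda>I\<in>Dupto (n - 1). hh n I x)"

definition haarvec :: "nat \<Rightarrow> real \<Rightarrow> (nat \<times> nat \<Rightarrow> real)" where
  "haarvec n x = (\<lambda>I\<in>Dupto (n - 1). haar I x)"

abbreviation vecspace :: "nat \<Rightarrow> (nat \<times> nat \<Rightarrow> real) measure" where
  "vecspace n \<equiv> PiM (Dupto (n - 1)) (\<lambda>_. borel)"

end

theory Submission
  imports Defs
begin


lemma holder_aux:
  fixes M :: "'a measure" and p q :: real
  assumes p: "1 < p" and q: "q = p / (p - 1)"
    and f[measurable]: "f \<in> borel_measurable M" and g[measurable]: "g \<in> borel_measurable M"
    and fq: "integrable M (\<lambda>x. \<bar>f x\<bar> powr q)" and gp: "integrable M (\<lambda>x. \<bar>g x\<bar> powr p)"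
  shows "integrable M (\<lambda>x. f x * g x) \<and>
    (LINT x|M. \<bar>f x * g x\<bar>) \<le> (LINT x|M. \<bar>f x\<bar> powr q) powr (1/q) * (LINT x|M. \<bar>g x\<bar> powr p) powr (1/p)"
proof -
  have q1: "1 < q" unfolding q using p by (simp add: less_divide_eq)
  have pq: "1/p + 1/q = 1"
  proof -
    have "1/q = (p-1)/p" unfolding q by simp
    then show ?thesis using p by (simp add: field_simps)
  qed
  have young: "\<And>a b. 0 \<le> a \<Longrightarrow> 0 \<le> b \<Longrightarrow> a * b \<le> a powr q / q + b powr p / p"
    using Youngs_inequality[OF q1 p] pq by (simp add: add.commute)
  have int: "integrable M (\<lambda>x. f x * g x)"
  proof (rule Bochner_Integration.integrable_bound)
    show "integrable M (\<lambda>x. \<bar>f x\<bar> powr q / q + \<bar>g x\<bar> powr p / p)"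
      using fq gp by auto
    show "(\<lambda>x. f x * g x) \<in> borel_measurable M" by measurable
    show "AE x in M. norm (f x * g x) \<le> norm (\<bar>f x\<bar> powr q / q + \<bar>g x\<bar> powr p / p)"
      using young q1 p by (auto simp: abs_mult intro!: order_trans[OF young])
  qed
  define A where "A = (LINT x|M. \<bar>f x\<bar> powr q)"
  define G where "G = (LINT x|M. \<bar>g x\<bar> powr p)"
  have A0: "0 \<le> A" unfolding A_def by auto
  have G0: "0 \<le> G" unfolding G_def by auto
  have lhs0: "0 \<le> (LINT x|M. \<bar>f x * g x\<bar>)" by auto
  show ?thesis
  proof (cases "A = 0 \<or> G = 0")
    case True
    then have "AE x in M. f x * g x = 0"
    proof
      assume "A = 0"
      then have "AE x in M. \<bar>f x\<bar> powr q = 0"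
        using integral_nonneg_eq_0_iff_AE[OF fq] unfolding A_def by auto
      then show ?thesis by eventually_elim auto
    next
      assume "G = 0"
      then have "AE x in M. \<bar>g x\<bar> powr p = 0"
        using integral_nonneg_eq_0_iff_AE[OF gp] unfolding G_def by auto
      then show ?thesis by eventually_elim auto
    qed
    then have "AE x in M. \<bar>f x * g x\<bar> = 0" by eventually_elim auto
    then have "(LINT x|M. \<bar>f x * g x\<bar>) = 0" using integral_cong_AE[of "\<lambda>x. \<bar>f x * g x\<bar>" M "\<lambda>_. 0"]
      by auto
    then show ?thesis using int by (simp add: A_def[symmetric] G_def[symmetric])
  next
    case False
    then have Ap: "A > 0" and Gp: "G > 0" using A0 G0 by auto
    define a where "a = A powr (1/q)"
    define b where "b = G powr (1/p)"
    have ap: "a > 0" "a powr q = A" unfolding a_def using Ap q1 by (auto simp: powr_powr)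
    have bp: "b > 0" "b powr p = G" unfolding b_def using Gp p by (auto simp: powr_powr)
    have pt: "\<bar>f x * g x\<bar> / (a * b) \<le> (\<bar>f x\<bar> powr q / A) / q + (\<bar>g x\<bar> powr p / G) / p" for x
    proof -
      have "\<bar>f x * g x\<bar> / (a * b) = (\<bar>f x\<bar> / a) * (\<bar>g x\<bar> / b)" by (simp add: abs_mult)
      also have "\<dots> \<le> (\<bar>f x\<bar> / a) powr q / q + (\<bar>g x\<bar> / b) powr p / p"
        by (rule young) (use ap bp in auto)
      also have "\<dots> = (\<bar>f x\<bar> powr q / A) / q + (\<bar>g x\<bar> powr p / G) / p"
        using ap bp by (simp add: powr_divide)
      finally show ?thesis .
    qed
    have "(LINT x|M. \<bar>f x * g x\<bar> / (a * b)) \<le> (LINT x|M. (\<bar>f x\<bar> powr q / A) / q + (\<bar>g x\<bar> powr p / G) / p)"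
      by (rule integral_mono) (use int fq gp pt in auto)
    also have "\<dots> = (A / A) / q + (G / G) / p"
      using fq gp by (simp add: A_def G_def)
    also have "\<dots> = 1" using Ap Gp pq by simp
    finally have "(LINT x|M. \<bar>f x * g x\<bar>) / (a * b) \<le> 1" by simp
    then have "(LINT x|M. \<bar>f x * g x\<bar>) \<le> a * b" using ap bp by (simp add: field_simps)
    then show ?thesis using int by (simp add: a_def b_def A_def G_def)
  qed
qed



lemma dyint_sub01: "K \<in> Dlev N \<Longrightarrow> dyint K \<subseteq> {0..1}"
proof -
  assume "K \<in> Dlev N"
  then obtain i where K: "K = (N, i)" "1 \<le> i" "i \<le> 2 ^ N" by (auto simp: Dlev_def)
  have "real i \<le> 2 ^ N" using K(3) by (metis of_nat_le_iff of_nat_numeral of_nat_power)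
  then have "real i / 2 ^ N \<le> 1" by simp
  moreover have "0 \<le> (real i - 1) / 2 ^ N" using K(2) by simp
  ultimately show ?thesis unfolding K(1)
  proof (intro subsetI)
    fix x assume a: "real i / 2 ^ N \<le> 1" "0 \<le> (real i - 1) / 2 ^ N"
      and "x \<in> dyint (N, i)"
    then have b: "(real i - 1) / 2 ^ N \<le> x" "x < real i / 2 ^ N" by (auto simp: dyint_def)
    have "x \<le> 1" using a(1) b(2) by linarith
    moreover have "0 \<le> x" using a(2) b(1) by linarith
    ultimately show "x \<in> {0..1}" by simp
  qed
qed

lemma borel_to_U01: "g \<in> borel_measurable borel \<Longrightarrow> g \<in> borel_measurable U01"
  by (intro measurable_restrict_space1 measurable_completion) simp

lemma fmU01: "finite_measure U01"
  by (rule finite_measure_lebesgue_on) simp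

lemma dyint_disj:
  assumes "K \<in> Dlev N" "K' \<in> Dlev N" "x \<in> dyint K" "x \<in> dyint K'"
  shows "K = K'"
proof -
  obtain i where K: "K = (N, i)" using assms(1) by (auto simp: Dlev_def)
  obtain j where K': "K' = (N, j)" using assms(2) by (auto simp: Dlev_def)
  have "real i - 1 \<le> x * 2 ^ N" "x * 2 ^ N < real i"
    "real j - 1 \<le> x * 2 ^ N" "x * 2 ^ N < real j"
    using assms(3,4) by (auto simp: K K' dyint_def field_simps)
  then have "real i - 1 < real j" "real j - 1 < real i" by linarith+
  then have "i = j" by linarith
  then show ?thesis using K K' by simp
qed

lemma dyint_measure: "K \<in> Dlev N \<Longrightarrow> measure lborel (dyint K) = 1 / 2 ^ N"
  by (auto simp: Dlev_def dyint_def measure_lborel_Ico diff_divide_distrib)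

lemma haar_nz:
  assumes "K \<in> Dlev N" "haar K x \<noteq> 0"
  shows "x \<in> dyint K"
proof -
  obtain i where K: "K = (N, i)" "1 \<le> i" using assms(1) by (auto simp: Dlev_def)
  have r: "real (2 * i - 1) = 2 * real i - 1" using K(2) by (simp add: of_nat_diff)
  have "x \<in> dyint (dyleft K) \<or> x \<in> dyint (dyright K)"
    using assms(2) by (auto simp: haar_def indicator_def split: if_splits)
  then show ?thesis
    using K(2) by (auto simp: K dyint_def dyleft_def dyright_def r field_simps)
qed

lemma haar_abs: "\<bar>haar K x\<bar> \<le> 1"
  by (auto simp: haar_def indicator_def)

lemma haar_meas[measurable]: "haar K \<in> borel_measurable borel"
  unfolding haar_def dyint_def by measurable

lemma haar_sum_bound:
  assumes fin: "finite B" and B: "B \<subseteq> Dlev N" and s: "\<And>K. \<bar>s K\<bar> \<le> 1"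
  shows "\<bar>\<Sum>K\<in>B. s K * haar K x\<bar> \<le> indicator (\<Union>K\<in>B. dyint K) x"
proof (cases "\<exists>K\<in>B. x \<in> dyint K")
  case False
  then have "\<And>K. K \<in> B \<Longrightarrow> haar K x = 0" using haar_nz B by blast
  then show ?thesis by simp
next
  case True
  then obtain K0 where K0: "K0 \<in> B" "x \<in> dyint K0" by blast
  have z: "\<And>K. K \<in> B - {K0} \<Longrightarrow> haar K x = 0"
    using haar_nz dyint_disj B K0 by blast
  have "(\<Sum>K\<in>B. s K * haar K x) = s K0 * haar K0 x + (\<Sum>K\<in>B - {K0}. s K * haar K x)"
    using fin K0(1) by (simp add: sum.remove)
  also have "\<dots> = s K0 * haar K0 x" using z by simp
  finally have "\<bar>\<Sum>K\<in>B. s K * haar K x\<bar> \<le> 1"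
    using s[of K0] haar_abs[of K0 x] by (simp add: abs_mult mult_le_one)
  moreover have "x \<in> (\<Union>K\<in>B. dyint K)" using K0 by blast
  ultimately show ?thesis by simp
qed

lemma haar_side:
  assumes fin: "finite B" and B: "B \<subseteq> Dlev N" and s: "\<And>K. \<bar>s K\<bar> \<le> 1" and p: "0 < p"
  shows "integrable U01 (\<lambda>x. \<bar>\<Sum>K\<in>B. s K * haar K x\<bar> powr p)
    \<and> (LINT x|U01. \<bar>\<Sum>K\<in>B. s K * haar K x\<bar> powr p) \<le> measure lborel (\<Union>K\<in>B. dyint K)"
proof -
  define S where "S = (\<Union>K\<in>B. dyint K)"
  have Sb: "S \<in> sets borel" unfolding S_def dyint_def using fin by (auto intro!: sets.finite_UN)
  have S01: "S \<subseteq> {0..1}" unfolding S_def using dyint_sub01 B by blast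
  have pt: "\<bar>\<Sum>K\<in>B. s K * haar K x\<bar> powr p \<le> indicator S x" for x
  proof -
    have b: "\<bar>\<Sum>K\<in>B. s K * haar K x\<bar> \<le> indicator S x" using haar_sum_bound[OF fin B s] S_def by simp
    show ?thesis
    proof (cases "x \<in> S")
      case True
      then have "\<bar>\<Sum>K\<in>B. s K * haar K x\<bar> \<le> 1" using b by simp
      then have "\<bar>\<Sum>K\<in>B. s K * haar K x\<bar> powr p \<le> 1 powr p"
        by (intro powr_mono2) (use p in auto)
      then show ?thesis using True by simp
    next
      case False then show ?thesis using b by simp
    qed
  qed
  have meas: "(\<lambda>x. \<bar>\<Sum>K\<in>B. s K * haar K x\<bar> powr p) \<in> borel_measurable U01"
    by (rule borel_to_U01) measurable
  have ind_int: "integrable U01 (indicator S :: real \<Rightarrow> real)"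
  proof -
    have "S \<in> sets U01" using Sb S01 by (auto simp: sets_restrict_space_iff)
    moreover have "emeasure U01 S < \<infinity>"
      using finite_measure.emeasure_finite[OF fmU01] by (simp add: top.not_eq_extremum)
    ultimately show ?thesis by simp
  qed
  have int: "integrable U01 (\<lambda>x. \<bar>\<Sum>K\<in>B. s K * haar K x\<bar> powr p)"
    by (rule Bochner_Integration.integrable_bound[OF ind_int meas]) (use pt in auto)
  have "(LINT x|U01. \<bar>\<Sum>K\<in>B. s K * haar K x\<bar> powr p) \<le> (LINT x|U01. indicator S x)"
    by (rule integral_mono[OF int ind_int]) (use pt in auto)
  also have "\<dots> = measure U01 S" using S01 by (simp add: Int_absorb2)
  also have "\<dots> = measure lebesgue S"
    using S01 by (subst measure_restrict_space) auto
  also have "\<dots> = measure lborel S" using Sb by (simp add: measure_completion)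
  finally show ?thesis using int S_def by simp
qed



lemma Dlev_finite: "finite (Dlev N)"
proof -
  have "Dlev N = (\<lambda>i. (N, i)) ` {1..2^N}" by (auto simp: Dlev_def)
  then show ?thesis by simp
qed

lemma Dlev_Dupto: "N < M \<Longrightarrow> Dlev N \<subseteq> Dupto (M - 1)"
  unfolding Dupto_def by (intro UN_upper) auto

lemma transfer:
  fixes hh :: "nat \<Rightarrow> nat \<times> nat \<Rightarrow> real \<Rightarrow> real"
  assumes hh_meas: "\<And>I. I \<in> Dupto (M - 1) \<Longrightarrow> hh M I \<in> borel_measurable U01"
    and distr: "distr U01 (vecspace M) (hvec M hh) = distr U01 (vecspace M) (haarvec M)"
    and B: "B \<subseteq> Dupto (M - 1)"
  shows "integrable U01 (\<lambda>x. \<bar>\<Sum>K\<in>B. s K * hh M K x\<bar> powr p)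
           = integrable U01 (\<lambda>x. \<bar>\<Sum>K\<in>B. s K * haar K x\<bar> powr p)"
    and "(LINT x|U01. \<bar>\<Sum>K\<in>B. s K * hh M K x\<bar> powr p)
           = (LINT x|U01. \<bar>\<Sum>K\<in>B. s K * haar K x\<bar> powr p)"
proof -
  define \<phi> where "\<phi> = (\<lambda>v::nat \<times> nat \<Rightarrow> real. \<bar>\<Sum>K\<in>B. s K * v K\<bar> powr p)"
  have phim: "\<phi> \<in> borel_measurable (vecspace M)"
    unfolding \<phi>_def using B
    by (intro measurable_abs_powr borel_measurable_sum
        borel_measurable_times measurable_const measurable_component_singleton) auto
  have hm: "hvec M hh \<in> measurable U01 (vecspace M)"
    unfolding hvec_def by (rule measurable_restrict) (use hh_meas in auto)
  have gm: "haarvec M \<in> measurable U01 (vecspace M)"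
    unfolding haarvec_def by (rule measurable_restrict) (auto intro: borel_to_U01)
  have e1: "(\<lambda>x. \<phi> (hvec M hh x)) = (\<lambda>x. \<bar>\<Sum>K\<in>B. s K * hh M K x\<bar> powr p)"
    unfolding \<phi>_def hvec_def using B by (intro ext arg_cong2[where f="(powr)"] arg_cong[where f=abs] sum.cong) auto
  have e2: "(\<lambda>x. \<phi> (haarvec M x)) = (\<lambda>x. \<bar>\<Sum>K\<in>B. s K * haar K x\<bar> powr p)"
    unfolding \<phi>_def haarvec_def using B by (intro ext arg_cong2[where f="(powr)"] arg_cong[where f=abs] sum.cong) auto
  show "integrable U01 (\<lambda>x. \<bar>\<Sum>K\<in>B. s K * hh M K x\<bar> powr p)
           = integrable U01 (\<lambda>x. \<bar>\<Sum>K\<in>B. s K * haar K x\<bar> powr p)"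
    using integrable_distr_eq[OF hm phim] integrable_distr_eq[OF gm phim] distr e1 e2 by simp
  show "(LINT x|U01. \<bar>\<Sum>K\<in>B. s K * hh M K x\<bar> powr p)
           = (LINT x|U01. \<bar>\<Sum>K\<in>B. s K * haar K x\<bar> powr p)"
    using integral_distr[OF hm phim] integral_distr[OF gm phim] distr e1 e2 by simp
qed

lemma flip_sum:
  fixes B :: "'k set" and F :: "('k \<Rightarrow> real) \<Rightarrow> real"
  assumes K: "K \<in> B" and F: "\<And>\<theta>. F (\<theta>(K := - \<theta> K)) = F \<theta>"
  shows "(\<Sum>\<theta>\<in>PiE B (\<lambda>_. {-1, 1::real}). \<theta> K * F \<theta>) = 0"
proof -
  let ?S = "PiE B (\<lambda>_. {-1, 1::real})"
  let ?fl = "\<lambda>\<theta>::'k\<Rightarrow>real. \<theta>(K := - \<theta> K)"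
  have mem: "?fl \<theta> \<in> ?S" if "\<theta> \<in> ?S" for \<theta>
    using that K by (auto simp: PiE_iff extensional_def)
  have "(\<Sum>\<theta>\<in>?S. \<theta> K * F \<theta>) = (\<Sum>\<theta>\<in>?S. ?fl \<theta> K * F (?fl \<theta>))"
    by (rule sum.reindex_bij_witness[of _ ?fl ?fl]) (auto simp: mem)
  also have "\<dots> = - (\<Sum>\<theta>\<in>?S. \<theta> K * F \<theta>)"
    by (simp add: F sum_negf)
  finally show ?thesis by simp
qed

theorem mainTheorem5:
  fixes p q :: real and hh :: "nat \<Rightarrow> nat \<times> nat \<Rightarrow> real \<Rightarrow> real"
    and M N :: nat and B :: "(nat \<times> nat) set" and f :: "real \<Rightarrow> real"
  assumes p: "1 < p" and q: "q = p / (p - 1)"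
    and hh_meas: "\<And>n I. 1 \<le> n \<Longrightarrow> I \<in> Dupto (n - 1) \<Longrightarrow> hh n I \<in> borel_measurable U01"
    and hh_Lp: "\<And>n I. 1 \<le> n \<Longrightarrow> I \<in> Dupto (n - 1) \<Longrightarrow>
                   integrable U01 (\<lambda>x. \<bar>hh n I x\<bar> powr p)"
    and hh_distr: "\<And>n. 1 \<le> n \<Longrightarrow>
                   distr U01 (vecspace n) (hvec n hh) = distr U01 (vecspace n) (haarvec n)"
    and hh_indep: "prob_space.indep_vars U01 vecspace (\<lambda>n. hvec n hh) {1..}"
    and MN: "N < M"
    and B: "B \<subseteq> Dlev N"
    and f_meas: "f \<in> borel_measurable U01"
    and f_Lq: "integrable U01 (\<lambda>x. \<bar>f x\<bar> powr q)"
    and f_mean: "(LINT x|U01. f x) = 0"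
  shows "measure_pmf.expectation (pmf_of_set (PiE B (\<lambda>_. {-1, 1::real})))
            (\<lambda>\<theta>. pair01 f (\<lambda>x. \<Sum>K\<in>B. \<theta> K * hh M K x)) = 0
       \<and> measure_pmf.variance (pmf_of_set (PiE B (\<lambda>_. {-1, 1::real})))
            (\<lambda>\<theta>. pair01 f (\<lambda>x. \<Sum>K\<in>B. \<theta> K * hh M K x))
         \<le> (Lnorm q f)\<^sup>2 * (measure lborel (\<Union>K\<in>B. dyint K)) powr (1 / p)
             * 2 powr (- real N / p)"
proof -
  have M1: "1 \<le> M" using MN by simp
  have finB: "finite B" using B Dlev_finite finite_subset by blast
  have BD: "B \<subseteq> Dupto (M - 1)" using B Dlev_Dupto[OF MN] by blast
  have hm: "\<And>K. K \<in> B \<Longrightarrow> hh M K \<in> borel_measurable U01" using hh_meas M1 BD by blast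
  note dist = hh_distr[OF M1]
  define L where "L = Lnorm q f"
  have L0: "0 \<le> L" unfolding L_def Lnorm_def by simp
  define mu where "mu = measure lborel (\<Union>K\<in>B. dyint K)"
  have mu0: "0 \<le> mu" unfolding mu_def by simp
  define a where "a K = (LINT x|U01. f x * hh M K x)" for K
  have gen: "integrable U01 (\<lambda>x. f x * (\<Sum>K\<in>B'. s K * hh M K x)) \<and>
     \<bar>LINT x|U01. f x * (\<Sum>K\<in>B'. s K * hh M K x)\<bar> \<le> L * measure lborel (\<Union>K\<in>B'. dyint K) powr (1/p)"
    if B': "B' \<subseteq> B" and s: "\<And>K. \<bar>s K\<bar> \<le> 1" for B' s
  proof -
    have finB': "finite B'" using B' finB finite_subset by blast
    have B'D: "B' \<subseteq> Dupto (M - 1)" using B' BD by blast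
    have B'L: "B' \<subseteq> Dlev N" using B' B by blast
    have gm: "(\<lambda>x. \<Sum>K\<in>B'. s K * hh M K x) \<in> borel_measurable U01"
      using hm B' by (intro borel_measurable_sum borel_measurable_times measurable_const) auto
    have hs: "integrable U01 (\<lambda>x. \<bar>\<Sum>K\<in>B'. s K * haar K x\<bar> powr p)"
      "(LINT x|U01. \<bar>\<Sum>K\<in>B'. s K * haar K x\<bar> powr p) \<le> measure lborel (\<Union>K\<in>B'. dyint K)"
      using haar_side[OF finB' B'L s, of p] p by auto
    note tr = transfer[OF hh_meas[OF M1] dist B'D, where s=s and p=p]
    have gp: "integrable U01 (\<lambda>x. \<bar>\<Sum>K\<in>B'. s K * hh M K x\<bar> powr p)" using tr(1) hs(1) by simp
    note H = holder_aux[OF p q f_meas gm f_Lq gp]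
    have "\<bar>LINT x|U01. f x * (\<Sum>K\<in>B'. s K * hh M K x)\<bar> \<le> (LINT x|U01. \<bar>f x * (\<Sum>K\<in>B'. s K * hh M K x)\<bar>)"
      by (rule integral_abs_bound)
    also have "\<dots> \<le> L * (LINT x|U01. \<bar>\<Sum>K\<in>B'. s K * hh M K x\<bar> powr p) powr (1/p)"
      using H by (simp add: L_def Lnorm_def)
    also have "\<dots> \<le> L * measure lborel (\<Union>K\<in>B'. dyint K) powr (1/p)"
    proof -
      have "0 \<le> (LINT x|U01. \<bar>\<Sum>K\<in>B'. s K * hh M K x\<bar> powr p)"
        by (rule Bochner_Integration.integral_nonneg) simp
      then show ?thesis using tr(2) hs(2) L0 p by (intro mult_left_mono powr_mono2) auto
    qed
    finally show ?thesis using H by simp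
  qed
  have aint: "integrable U01 (\<lambda>x. f x * hh M K x)" and abound: "\<bar>a K\<bar> \<le> L * (1 / 2 ^ N) powr (1/p)"
    if K: "K \<in> B" for K
  proof -
    have "{K} \<subseteq> B" using K by simp
    have s1: "\<And>K. \<bar>(\<lambda>_. 1::real) K\<bar> \<le> 1" by simp
    note G = gen[OF \<open>{K} \<subseteq> B\<close> s1]
    have KN: "K \<in> Dlev N" using K B by blast
    have e: "(\<Sum>K'\<in>{K}. (\<lambda>_. 1::real) K' * hh M K' x) = hh M K x" for x by simp
    have m: "measure lborel (\<Union>K'\<in>{K}. dyint K') = 1 / 2 ^ N" using dyint_measure[OF KN] by simp
    show "integrable U01 (\<lambda>x. f x * hh M K x)" using G unfolding e by blast
    show "\<bar>a K\<bar> \<le> L * (1 / 2 ^ N) powr (1/p)"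
      using G unfolding e m a_def by blast
  qed
  have Y: "pair01 f (\<lambda>x. \<Sum>K\<in>B. \<theta> K * hh M K x) = (\<Sum>K\<in>B. \<theta> K * a K)" for \<theta>
  proof -
    have "pair01 f (\<lambda>x. \<Sum>K\<in>B. \<theta> K * hh M K x) = (LINT x|U01. (\<Sum>K\<in>B. \<theta> K * (f x * hh M K x)))"
      unfolding pair01_def by (rule Bochner_Integration.integral_cong[OF refl]) (simp only: sum_distrib_left, intro sum.cong refl, rule mult.left_commute)
    also have "\<dots> = (\<Sum>K\<in>B. (LINT x|U01. \<theta> K * (f x * hh M K x)))"
      using aint by (intro Bochner_Integration.integral_sum) auto
    also have "\<dots> = (\<Sum>K\<in>B. \<theta> K * a K)" by (simp add: a_def)
    finally show ?thesis .
  qed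
  have suma: "(\<Sum>K\<in>B. \<bar>a K\<bar>) \<le> L * mu powr (1/p)"
  proof -
    have "(\<Sum>K\<in>B. \<bar>a K\<bar>) = (\<Sum>K\<in>B. sgn (a K) * a K)" by (rule sum.cong[OF refl]) (subst abs_sgn, rule mult.commute)
    also have "\<dots> = pair01 f (\<lambda>x. \<Sum>K\<in>B. sgn (a K) * hh M K x)"
      by (rule Y[of "\<lambda>K. sgn (a K)", symmetric])
    also have "\<dots> = (LINT x|U01. f x * (\<Sum>K\<in>B. sgn (a K) * hh M K x))"
      by (simp add: pair01_def)
    also have "\<dots> \<le> L * mu powr (1/p)"
    proof -
      have s1: "\<And>K. \<bar>sgn (a K)\<bar> \<le> (1::real)" by (simp add: abs_sgn_eq)
      have "\<bar>LINT x|U01. f x * (\<Sum>K\<in>B. sgn (a K) * hh M K x)\<bar> \<le> L * mu powr (1/p)"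
        unfolding mu_def by (rule conjunct2[OF gen[OF order_refl s1]])
      then show ?thesis by (rule abs_le_D1)
    qed
    finally show ?thesis .
  qed
  let ?S = "PiE B (\<lambda>_. {-1, 1::real})"
  have Sfin: "finite ?S" using finB by (simp add: finite_PiE)
  have Sne: "?S \<noteq> {}" by (simp add: PiE_eq_empty_iff)
  have E: "measure_pmf.expectation (pmf_of_set ?S) (\<lambda>\<theta>. pair01 f (\<lambda>x. \<Sum>K\<in>B. \<theta> K * hh M K x)) = 0"
  proof -
    have "(\<Sum>\<theta>\<in>?S. \<Sum>K\<in>B. \<theta> K * a K) = (\<Sum>K\<in>B. \<Sum>\<theta>\<in>?S. \<theta> K * a K)" by (rule sum.swap)
    also have "\<dots> = 0"
    proof (rule sum.neutral, intro ballI)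
      fix K assume "K \<in> B"
      then show "(\<Sum>\<theta>\<in>?S. \<theta> K * a K) = 0" using flip_sum[of K B "\<lambda>_. a K"] by simp
    qed
    finally show ?thesis using Sfin Sne by (simp add: Y integral_pmf_of_set)
  qed
  have pairs: "(\<Sum>\<theta>\<in>?S. \<theta> K * \<theta> K') = (if K = K' then real (card ?S) else 0)"
    if "K \<in> B" "K' \<in> B" for K K'
  proof (cases "K = K'")
    case True
    have "(\<Sum>\<theta>\<in>?S. \<theta> K * \<theta> K') = (\<Sum>\<theta>\<in>?S. 1)"
      using that True by (intro sum.cong) (auto simp: PiE_iff)
    then show ?thesis using True by simp
  next
    case False
    have "(\<Sum>\<theta>\<in>?S. \<theta> K * \<theta> K') = 0"
      by (rule flip_sum) (use that False in auto)
    then show ?thesis using False by simp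
  qed
  have V: "measure_pmf.variance (pmf_of_set ?S) (\<lambda>\<theta>. pair01 f (\<lambda>x. \<Sum>K\<in>B. \<theta> K * hh M K x))
     = (\<Sum>K\<in>B. (a K)\<^sup>2)"
  proof -
    have "(\<Sum>\<theta>\<in>?S. (\<Sum>K\<in>B. \<theta> K * a K)\<^sup>2) = (\<Sum>\<theta>\<in>?S. \<Sum>K\<in>B. \<Sum>K'\<in>B. a K * a K' * (\<theta> K * \<theta> K'))"
      by (simp add: power2_eq_square sum_product algebra_simps)
    also have "\<dots> = (\<Sum>K\<in>B. \<Sum>K'\<in>B. a K * a K' * (\<Sum>\<theta>\<in>?S. \<theta> K * \<theta> K'))"
    proof -
      have "(\<Sum>\<theta>\<in>?S. \<Sum>K\<in>B. \<Sum>K'\<in>B. a K * a K' * (\<theta> K * \<theta> K'))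
          = (\<Sum>K\<in>B. \<Sum>\<theta>\<in>?S. \<Sum>K'\<in>B. a K * a K' * (\<theta> K * \<theta> K'))" by (rule sum.swap)
      also have "\<dots> = (\<Sum>K\<in>B. \<Sum>K'\<in>B. \<Sum>\<theta>\<in>?S. a K * a K' * (\<theta> K * \<theta> K'))"
        by (intro sum.cong refl) (rule sum.swap)
      also have "\<dots> = (\<Sum>K\<in>B. \<Sum>K'\<in>B. a K * a K' * (\<Sum>\<theta>\<in>?S. \<theta> K * \<theta> K'))"
        by (simp only: sum_distrib_left)
      finally show ?thesis .
    qed
    also have "\<dots> = (\<Sum>K\<in>B. \<Sum>K'\<in>B. (if K = K' then a K * a K' * real (card ?S) else 0))"
      by (intro sum.cong refl) (simp add: pairs)
    also have "\<dots> = (\<Sum>K\<in>B. (a K)\<^sup>2) * real (card ?S)"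
      using finB by (simp add: sum_distrib_right power2_eq_square)
    finally have "(\<Sum>\<theta>\<in>?S. (\<Sum>K\<in>B. \<theta> K * a K)\<^sup>2) / real (card ?S) = (\<Sum>K\<in>B. (a K)\<^sup>2)"
      using Sfin Sne by simp
    then show ?thesis using E Sfin Sne by (simp add: Y integral_pmf_of_set)
  qed
  have m0: "0 \<le> L * (1 / 2 ^ N) powr (1/p)" using L0 by simp
  have "(\<Sum>K\<in>B. (a K)\<^sup>2) \<le> (\<Sum>K\<in>B. (L * (1 / 2 ^ N) powr (1/p)) * \<bar>a K\<bar>)"
  proof (intro sum_mono)
    fix K assume K: "K \<in> B"
    have "(a K)\<^sup>2 = \<bar>a K\<bar> * \<bar>a K\<bar>" by (simp add: power2_eq_square)
    also have "\<dots> \<le> (L * (1 / 2 ^ N) powr (1/p)) * \<bar>a K\<bar>"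
      by (rule mult_right_mono[OF abound[OF K] abs_ge_zero])
    finally show "(a K)\<^sup>2 \<le> (L * (1 / 2 ^ N) powr (1/p)) * \<bar>a K\<bar>" .
  qed
  also have "\<dots> = (L * (1 / 2 ^ N) powr (1/p)) * (\<Sum>K\<in>B. \<bar>a K\<bar>)" by (simp add: sum_distrib_left)
  also have "\<dots> \<le> (L * (1 / 2 ^ N) powr (1/p)) * (L * mu powr (1/p))"
    by (rule mult_left_mono[OF suma m0])
  also have "\<dots> = L\<^sup>2 * mu powr (1/p) * 2 powr (- real N / p)"
  proof -
    have "(1 / 2 ^ N :: real) = 2 powr (- real N)" by (simp add: powr_minus powr_realpow inverse_eq_divide)
    then have "(1 / 2 ^ N :: real) powr (1/p) = 2 powr (- real N / p)" by (simp add: powr_powr)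
    then show ?thesis by (simp add: power2_eq_square)
  qed
  finally show ?thesis using E V by (simp add: L_def mu_def)
qed

end
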